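(* Let $C$ be a projective linear code of length $n$ over $\mathbb{Z}_4$ of type $4^{k_1}2^{k_2}$ with exactly two nonzero Lee weights, and let $G\in\mathbb{Z}_4^{(k_1+k_2)\times n}$ be a generator matrix of $C$. If $C$ is Plotkin-optimal, then $w_L(\mathbf{x}G)=n$ for all $\mathbf{x}\in\mathbb{Z}_4^{k_1+k_2}\setminus(2\mathbb{Z}_4)^{k_1+k_2}$.
   Context: A linear code of length $n$ over $\mathbb{Z}_4$ is a $\mathbb{Z}_4$-submodule of $\mathbb{Z}_4^n$, of type $4^{k_1}2^{k_2}$ if isomorphic to $\mathbb{Z}_4^{k_1}\times\mathbb{Z}_2^{k_2}$. A generator matrix is a matrix whose rows generate the code and no proper subset of whose rows does. Lee weight: $w_L(0)=0,w_L(1)=1,w_L(2)=2,w_L(3)=1$, additive on vectors. Plotkin-optimal: minimum nonzero Lee weight equals $\lfloor\frac{|C|}{|C|-1}n\rfloor$. Projective: the dual with respect to $\sum x_iy_i\in\mathbb{Z}_4$ has minimum Lee distance at least $3$. $2\mathbb{Z}_4=\{0,2\}$. *)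

theory Defs
  imports Complex_Main "HOL-Library.Numeral_Type"
begin

type_synonym z4 = "4"

definition vecs :: "nat \<Rightarrow> (nat \<Rightarrow> z4) set" where
  "vecs n = {v. \<forall>i\<ge>n. v i = 0}"

definition lee :: "z4 \<Rightarrow> nat" where
  "lee a = (if a = 0 then 0 else if a = 2 then 2 else 1)"

definition lee_weight :: "nat \<Rightarrow> (nat \<Rightarrow> z4) \<Rightarrow> nat" where
  "lee_weight n v = (\<Sum>j<n. lee (v j))"

definition linear_code :: "nat \<Rightarrow> (nat \<Rightarrow> z4) set \<Rightarrow> bool" where
  "linear_code n C \<longleftrightarrow> C \<subseteq> vecs n \<and> (\<lambda>_. 0) \<in> C \<and>
     (\<forall>u\<in>C. \<forall>v\<in>C. (\<lambda>j. u j + v j) \<in> C) \<and> (\<forall>a::z4. \<forall>v\<in>C. (\<lambda>j. a * v j) \<in> C)"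

text \<open>Z4^k1 x Z2^k2, with Z2 realised as the subgroup 2Z4 = {0,2} of Z4.\<close>
definition model_group :: "nat \<Rightarrow> nat \<Rightarrow> (nat \<Rightarrow> z4) set" where
  "model_group k1 k2 = {x \<in> vecs (k1 + k2). \<forall>i. k1 \<le> i \<and> i < k1 + k2 \<longrightarrow> x i \<in> {0, 2}}"

definition code_type :: "(nat \<Rightarrow> z4) set \<Rightarrow> nat \<Rightarrow> nat \<Rightarrow> bool" where
  "code_type C k1 k2 \<longleftrightarrow> (\<exists>f. bij_betw f (model_group k1 k2) C \<and>
     (\<forall>x\<in>model_group k1 k2. \<forall>y\<in>model_group k1 k2. f (\<lambda>i. x i + y i) = (\<lambda>j. f x j + f y j)))"

definition lincomb :: "nat set \<Rightarrow> (nat \<Rightarrow> z4) \<Rightarrow> (nat \<Rightarrow> nat \<Rightarrow> z4) \<Rightarrow> (nat \<Rightarrow> z4)" where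
  "lincomb S x G = (\<lambda>j. \<Sum>i\<in>S. x i * G i j)"

definition row_span :: "nat set \<Rightarrow> (nat \<Rightarrow> nat \<Rightarrow> z4) \<Rightarrow> (nat \<Rightarrow> z4) set" where
  "row_span S G = {lincomb S x G | x. True}"

definition generator_matrix :: "nat \<Rightarrow> (nat \<Rightarrow> nat \<Rightarrow> z4) \<Rightarrow> (nat \<Rightarrow> z4) set \<Rightarrow> bool" where
  "generator_matrix m G C \<longleftrightarrow> row_span {..<m} G = C \<and>
     (\<forall>S. S \<subset> {..<m} \<longrightarrow> row_span S G \<noteq> C)"

definition dual_code :: "nat \<Rightarrow> (nat \<Rightarrow> z4) set \<Rightarrow> (nat \<Rightarrow> z4) set" where
  "dual_code n C = {y \<in> vecs n. \<forall>x\<in>C. (\<Sum>j<n. x j * y j) = 0}"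

definition projective :: "nat \<Rightarrow> (nat \<Rightarrow> z4) set \<Rightarrow> bool" where
  "projective n C \<longleftrightarrow> (\<forall>y\<in>dual_code n C. \<forall>z\<in>dual_code n C. y \<noteq> z \<longrightarrow> lee_weight n (\<lambda>j. y j - z j) \<ge> 3)"

definition nonzero_weights :: "nat \<Rightarrow> (nat \<Rightarrow> z4) set \<Rightarrow> nat set" where
  "nonzero_weights n C = {lee_weight n v | v. v \<in> C \<and> v \<noteq> (\<lambda>_. 0)}"

definition plotkin_optimal :: "nat \<Rightarrow> (nat \<Rightarrow> z4) set \<Rightarrow> bool" where
  "plotkin_optimal n C \<longleftrightarrow>
     int (Min (nonzero_weights n C)) = \<lfloor>real (card C) / (real (card C) - 1) * real n\<rfloor>"

end

theory Submission
  imports Defs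
begin

lemma z4_cases: "(a::z4) = 0 \<or> a = 1 \<or> a = 2 \<or> a = 3"
proof (induct a)
  case (of_int z)
  then have "0 \<le> z" "z < 4" by simp_all
  then have "z = 0 \<or> z = 1 \<or> z = 2 \<or> z = 3" by arith
  then show ?case by auto
qed

lemma lee_plus2: "lee (a::z4) + lee (a + 2) = 2"
  using z4_cases[of a] by (auto simp: lee_def)

lemma odd_plus_even: "(a::z4) \<notin> {0,2} \<Longrightarrow> a + 2 * b \<notin> {0,2}"
  using z4_cases[of a] z4_cases[of b] by auto

lemma odd_sq: "(a::z4) \<notin> {0,2} \<Longrightarrow> a * a = 1"
  using z4_cases[of a] by auto

lemma odd_twice: "(a::z4) \<notin> {0,2} \<Longrightarrow> 2 * a = 2"
  using z4_cases[of a] by auto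

lemma even_twice: "(a::z4) \<in> {0,2} \<Longrightarrow> a * 2 = 0"
  by auto

lemma four_zero: "2 * (a::z4) + 2 * a = 0"
proof -
  have "2 * a + 2 * a = (4::z4) * a" by (simp add: algebra_simps)
  also have "(4::z4) = 0" by simp
  finally show ?thesis by simp
qed

lemma finite_vecs: "finite (vecs n)"
proof -
  have "vecs n = {f. \<forall>x. (x \<in> {..<n} \<longrightarrow> f x \<in> UNIV) \<and> (x \<notin> {..<n} \<longrightarrow> f x = (0::z4))}"
    unfolding vecs_def by auto
  moreover have "finite {f. \<forall>x. (x \<in> {..<n} \<longrightarrow> f x \<in> UNIV) \<and> (x \<notin> {..<n} \<longrightarrow> f x = (0::z4))}"
    by (rule finite_set_of_finite_funs) simp_all
  ultimately show ?thesis by simp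
qed

theorem corollary4p5:
  fixes n k1 k2 :: nat and C :: "(nat \<Rightarrow> z4) set" and G :: "nat \<Rightarrow> nat \<Rightarrow> z4"
  assumes "linear_code n C"
    and "code_type C k1 k2"
    and "projective n C"
    and "card (nonzero_weights n C) = 2"
    and "generator_matrix (k1 + k2) G C"
    and "plotkin_optimal n C"
  shows "\<forall>x\<in>vecs (k1 + k2). (\<exists>i<k1 + k2. x i \<notin> {0, 2}) \<longrightarrow>
           lee_weight n (lincomb {..<k1 + k2} x G) = n"
proof (intro ballI impI)
  fix x assume "x \<in> vecs (k1 + k2)" and "\<exists>i<k1 + k2. x i \<notin> {0, 2}"
  define m where "m = k1 + k2"
  obtain i where i: "i < m" "x i \<notin> {0,2}" using \<open>\<exists>i<k1 + k2. x i \<notin> {0, 2}\<close> m_def by auto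
  define L where "L y = lincomb {..<m} y G" for y
  define K where "K = {L y | y. y i \<notin> {0,2}}"
  have gm: "generator_matrix m G C" using assms(5) m_def by simp
  have F1: "C = {L y | y. True}" using gm unfolding generator_matrix_def row_span_def L_def by auto
  have Ladd: "L (\<lambda>l. y l + 2 * z l) = (\<lambda>j. L y j + 2 * L z j)" for y z
    unfolding L_def lincomb_def by (auto simp: algebra_simps sum.distrib sum_distrib_left)
  have L2: "L (\<lambda>l. 2 * z l) = (\<lambda>j. 2 * L z j)" for z
    unfolding L_def lincomb_def by (auto simp: algebra_simps sum_distrib_left)
  have F2: "K \<subseteq> C" using F1 K_def by auto
  have finC: "finite C" using assms(1) finite_vecs unfolding linear_code_def
    by (meson finite_subset)
  have finK: "finite K" using F2 finC finite_subset by auto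
  \<comment> \<open>minimality\<close>
  have F3: "(\<lambda>_. 0) \<notin> K"
  proof
    assume "(\<lambda>_. 0) \<in> K"
    then obtain y where y: "L y = (\<lambda>_. 0)" "y i \<notin> {0,2}" unfolding K_def by auto
    define u where "u = y i"
    have uu: "u * u = 1" using odd_sq y(2) u_def by simp
    define S where "S = {..<m} - {i}"
    have Ssub: "S \<subset> {..<m}" using i(1) S_def by auto
    have split: "lincomb {..<m} z G j = z i * G i j + (\<Sum>l\<in>S. z l * G l j)" for z j
      unfolding lincomb_def S_def using i(1)
      by (simp add: sum.remove[of "{..<m}" i])
    have Gi: "G i j = - u * (\<Sum>l\<in>S. y l * G l j)" for j
    proof -
      have e: "u * G i j + (\<Sum>l\<in>S. y l * G l j) = 0"
        using fun_cong[OF y(1), of j] split[of y j] u_def unfolding L_def by simp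
      have "u * u * G i j + u * (\<Sum>l\<in>S. y l * G l j) = u * (u * G i j + (\<Sum>l\<in>S. y l * G l j))"
        by (simp add: algebra_simps)
      also have "\<dots> = 0" using e by simp
      finally have "G i j + u * (\<Sum>l\<in>S. y l * G l j) = 0" using uu by simp
      then have "G i j = - (u * (\<Sum>l\<in>S. y l * G l j))" by (simp add: add_eq_0_iff2)
      then show ?thesis by simp
    qed
    have "row_span S G = C"
    proof
      show "row_span S G \<subseteq> C"
      proof
        fix v assume "v \<in> row_span S G"
        then obtain z where z: "v = lincomb S z G" unfolding row_span_def by auto
        have "v = L (\<lambda>l. if l \<in> S then z l else 0)"
          unfolding z L_def lincomb_def
        proof
          fix j
          have "(\<Sum>l<m. (if l \<in> S then z l else 0) * G l j) = (\<Sum>l<m. if l \<in> S then z l * G l j else 0)"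
            by (rule sum.cong) auto
          also have "\<dots> = (\<Sum>l\<in>{..<m} \<inter> S. z l * G l j)"
            by (simp add: sum.inter_restrict)
          also have "{..<m} \<inter> S = S" using Ssub by auto
          finally show "(\<Sum>l\<in>S. z l * G l j) = (\<Sum>l<m. (if l \<in> S then z l else 0) * G l j)" by simp
        qed
        then show "v \<in> C" using F1 by auto
      qed
    next
      show "C \<subseteq> row_span S G"
      proof
        fix v assume "v \<in> C"
        then obtain z where z: "v = L z" using F1 by auto
        have "v = lincomb S (\<lambda>l. z l - z i * u * y l) G"
        proof
          fix j
          have "v j = z i * G i j + (\<Sum>l\<in>S. z l * G l j)" using z split unfolding L_def by simp
          also have "\<dots> = (\<Sum>l\<in>S. z l * G l j) - z i * u * (\<Sum>l\<in>S. y l * G l j)"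
            using Gi[of j] by (simp add: algebra_simps)
          also have "\<dots> = (\<Sum>l\<in>S. (z l - z i * u * y l) * G l j)"
            by (simp add: algebra_simps sum_subtractf sum_distrib_left)
          finally show "v j = lincomb S (\<lambda>l. z l - z i * u * y l) G j" unfolding lincomb_def by simp
        qed
        then show "v \<in> row_span S G" unfolding row_span_def by auto
      qed
    qed
    then show False using gm Ssub unfolding generator_matrix_def by blast
  qed
  \<comment> \<open>projectivity: every coordinate has a unit\<close>
  have F5: "\<exists>c\<in>C. c j \<notin> {0,2}" if j: "j < n" for j
  proof (rule ccontr)
    assume "\<not> (\<exists>c\<in>C. c j \<notin> {0,2})"
    then have ev: "\<forall>c\<in>C. c j \<in> {0,2}" by blast
    define y :: "nat \<Rightarrow> z4" where "y l = (if l = j then 2 else 0)" for l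
    have yv: "y \<in> vecs n" using j unfolding vecs_def y_def by auto
    have "y \<in> dual_code n C"
    proof -
      have "(\<Sum>l<n. c l * y l) = 0" if "c \<in> C" for c
      proof -
        have "(\<lambda>l. c l * y l) = (\<lambda>l. if l = j then c j * 2 else 0)" unfolding y_def by auto
        then have "(\<Sum>l<n. c l * y l) = (\<Sum>l<n. if l = j then c j * 2 else 0)"
          by (intro sum.cong) (auto simp: fun_eq_iff)
        also have "\<dots> = c j * 2" using j by (simp add: sum.delta)
        finally have "(\<Sum>l<n. c l * y l) = c j * 2" .
        then show ?thesis using even_twice ev that by auto
      qed
      then show ?thesis using yv unfolding dual_code_def by auto
    qed
    moreover have "(\<lambda>_. 0) \<in> dual_code n C" unfolding dual_code_def vecs_def by auto
    moreover have "y \<noteq> (\<lambda>_. 0)" unfolding y_def by (auto dest: fun_cong[of _ _ j])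
    ultimately have "lee_weight n (\<lambda>l. y l - 0) \<ge> 3" using assms(3) unfolding projective_def by blast
    moreover have "lee_weight n (\<lambda>l. y l - 0) = 2"
    proof -
      have "(\<lambda>l. lee (y l - 0)) = (\<lambda>l. if l = j then 2 else 0)" unfolding y_def lee_def by auto
      then have "(\<Sum>l<n. lee (y l - 0)) = (\<Sum>l<n. if l = j then 2 else 0)"
        by (intro sum.cong) (auto simp: fun_eq_iff)
      also have "\<dots> = 2" using j by (simp add: sum.delta)
      finally show ?thesis unfolding lee_weight_def .
    qed
    ultimately show False by simp
  qed
  have F6: "(\<Sum>k\<in>K. lee (k j)) = card K" if j: "j < n" for j
  proof -
    obtain c where c: "c \<in> C" "c j \<notin> {0,2}" using F5 j by blast
    obtain z where z: "c = L z" using c F1 by auto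
    define h where "h = L (\<lambda>l. 2 * z l)"
    have h: "h = (\<lambda>l. 2 * c l)" unfolding h_def z by (rule L2)
    define f where "f k = (\<lambda>l. k l + h l)" for k :: "nat \<Rightarrow> z4"
    have fK: "f k \<in> K" if "k \<in> K" for k
    proof -
      obtain y where y: "k = L y" "y i \<notin> {0,2}" using \<open>k \<in> K\<close> K_def by auto
      have "f k = L (\<lambda>l. y l + 2 * z l)" unfolding f_def y(1) Ladd h z L2 by simp
      then show ?thesis unfolding K_def using odd_plus_even[OF y(2)] by auto
    qed
    have ff: "f (f k) = k" for k
      unfolding f_def h by (auto simp: four_zero add.assoc)
    have bij: "bij_betw f K K"
      by (rule bij_betwI') (metis ff, simp add: fK, metis ff fK)
    have "(\<Sum>k\<in>K. lee (k j)) = (\<Sum>k\<in>K. lee (f k j))"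
      using sum.reindex_bij_betw[OF bij, of "\<lambda>k. lee (k j)"] by simp
    also have "\<dots> = (\<Sum>k\<in>K. lee (k j + 2))"
      unfolding f_def h using odd_twice[OF c(2)] by simp
    finally have "2 * (\<Sum>k\<in>K. lee (k j)) = (\<Sum>k\<in>K. lee (k j)) + (\<Sum>k\<in>K. lee (k j + 2))"
      by simp
    also have "\<dots> = (\<Sum>k\<in>K. 2)" by (simp add: sum.distrib[symmetric] lee_plus2)
    finally show ?thesis by simp
  qed
  have F7: "(\<Sum>k\<in>K. lee_weight n k) = n * card K"
  proof -
    have "(\<Sum>k\<in>K. lee_weight n k) = (\<Sum>j<n. \<Sum>k\<in>K. lee (k j))"
      unfolding lee_weight_def by (rule sum.swap)
    also have "\<dots> = (\<Sum>j<n. card K)" using F6 by simp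
    finally show ?thesis by simp
  qed
  have xK: "L x \<in> K" unfolding K_def using i by auto
  have F8: "n \<le> lee_weight n k" if k: "k \<in> K" for k
  proof -
    have kC: "k \<in> C" and k0: "k \<noteq> (\<lambda>_. 0)" using k F2 F3 by auto
    have kw: "lee_weight n k \<in> nonzero_weights n C" unfolding nonzero_weights_def using kC k0 by auto
    have finW: "finite (nonzero_weights n C)" using assms(4) by (intro card_ge_0_finite) simp
    have minle: "Min (nonzero_weights n C) \<le> lee_weight n k" using Min_le[OF finW kw] .
    have "(\<lambda>_. 0) \<in> C" using assms(1) unfolding linear_code_def by auto
    then have "{(\<lambda>_. 0), k} \<subseteq> C" using kC by auto
    then have "card {(\<lambda>_. 0), k} \<le> card C" using finC card_mono by blast
    then have M2: "card C \<ge> 2" using k0 by auto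
    define M where "M = real (card C)"
    have "M \<ge> 2" using M2 M_def by simp
    then have "M / (M - 1) \<ge> 1" by simp
    then have "M / (M - 1) * real n \<ge> real n" using mult_right_mono[of 1 "M / (M - 1)" "real n"] by simp
    then have "\<lfloor>M / (M - 1) * real n\<rfloor> \<ge> int n" by (simp add: le_floor_iff)
    then have "int (Min (nonzero_weights n C)) \<ge> int n"
      using assms(6) unfolding plotkin_optimal_def M_def by simp
    then show ?thesis using minle by simp
  qed
  have "lee_weight n (L x) = n"
  proof (rule ccontr)
    assume "lee_weight n (L x) \<noteq> n"
    then have "n < lee_weight n (L x)" using F8[OF xK] by simp
    then have "(\<Sum>k\<in>K. n) < (\<Sum>k\<in>K. lee_weight n k)"
      using sum_strict_mono_ex1[OF finK, of "\<lambda>_. n" "lee_weight n"] F8 xK by blast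
    then show False using F7 by (simp add: mult.commute)
  qed
  then show "lee_weight n (lincomb {..<k1 + k2} x G) = n" unfolding L_def m_def .
qed

end
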